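(* Let $n\ge3$ be odd, $n_1=(n+1)/2$, and let $\widehat Z=\mathrm{diag}(\widehat Z_1,\dots,\widehat Z_d)$ with $\widehat Z_i\in\mathbb C^{n_1\times n_1}$ satisfy $\max_{p\in[n_1]}\frac1d\sum_{i=1}^d\|e_p^{\mathsf T}\widehat Z_i\|_2^2\le B$. Then $$\frac1d\sum_{i=1}^d\sum_{k=1}^n\frac1{w_k}\big|\langle\widehat Z_i,G_k\rangle\big|^2\le C\,B\log(n_1)$$ for an absolute constant $C>0$.
   Context: For $a\in[n]$, $w_a=\#\{(j,k)\in[n_1]\times[n_1]:j+k=a+1\}$ and $G_a=w_a^{-1/2}\sum_{j+k=a+1}e_je_k^{\mathsf T}\in\mathbb R^{n_1\times n_1}$. Inner product $\langle A,B\rangle=\mathrm{tr}(AB^{\mathsf H})$. *)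

theory Defs
  imports "HOL-Analysis.Analysis"
begin

text \<open>Matrices in C^{n1 x n1} are represented as functions nat => nat => complex,
  with row/column indices 0..n1-1 (0-based; the paper's e_j with j in [n1] is index j-1).
  Hankel index a ranges over [n] = {1..n}. In 1-based indices the condition is j+k = a+1,
  which in 0-based indices reads j+k+1 = a.\<close>

definition hankel_w :: "nat \<Rightarrow> nat \<Rightarrow> nat" where
  "hankel_w n1 a = card {(j,k). j < n1 \<and> k < n1 \<and> j + k + 1 = a}"

definition hankel_G :: "nat \<Rightarrow> nat \<Rightarrow> nat \<Rightarrow> nat \<Rightarrow> complex" where
  "hankel_G n1 a j k =
     (if j < n1 \<and> k < n1 \<and> j + k + 1 = a
      then complex_of_real (1 / sqrt (real (hankel_w n1 a))) else 0)"

definition mat_inner :: "nat \<Rightarrow> (nat \<Rightarrow> nat \<Rightarrow> complex) \<Rightarrow> (nat \<Rightarrow> nat \<Rightarrow> complex) \<Rightarrow> complex" where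
  "mat_inner n1 A B = (\<Sum>j<n1. \<Sum>k<n1. A j k * cnj (B j k))"

definition row_norm2 :: "nat \<Rightarrow> (nat \<Rightarrow> nat \<Rightarrow> complex) \<Rightarrow> nat \<Rightarrow> real" where
  "row_norm2 n1 A p = (\<Sum>k<n1. (cmod (A p k))^2)"

end

theory Submission
  imports Defs
begin

lemma w_lower:
  assumes "j < n1" "l < n1"
  shows "min (j+1) (n1-j) \<le> hankel_w n1 (j+l+1)"
proof -
  define a where "a = j+l+1"
  define S where "S = {(j,k). j < n1 \<and> k < n1 \<and> j + k + 1 = a}"
  have w: "hankel_w n1 (j+l+1) = card S" unfolding S_def a_def hankel_w_def by simp
  have fin: "finite S" by (rule finite_subset[of _ "{..<n1} \<times> {..<n1}"]) (auto simp: S_def)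
  have inj: "inj_on (\<lambda>t. (t, a-1-t)) X" for X by (auto simp: inj_on_def)
  show ?thesis
  proof (cases "a \<le> n1")
    case True
    have "(\<lambda>t. (t, a-1-t)) ` {..<a} \<subseteq> S" using True by (auto simp: S_def)
    hence "card ((\<lambda>t. (t, a-1-t)) ` {..<a}) \<le> card S" using fin by (rule card_mono[rotated])
    hence "a \<le> card S" by (subst (asm) card_image[OF inj]) simp
    thus ?thesis using w a_def by simp
  next
    case False
    have "(\<lambda>t. (t, a-1-t)) ` {a-n1..<n1} \<subseteq> S" using False by (auto simp: S_def)
    hence "card ((\<lambda>t. (t, a-1-t)) ` {a-n1..<n1}) \<le> card S" using fin by (rule card_mono[rotated])
    hence "n1 - (a - n1) \<le> card S" by (subst (asm) card_image[OF inj]) simp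
    thus ?thesis using w a_def assms by simp
  qed
qed

lemma inv_w_le:
  assumes "j < n1" "l < n1"
  shows "1 / real (hankel_w n1 (j+l+1)) \<le> 1/real (j+1) + 1/real (n1-j)"
proof -
  have m: "real (min (j+1) (n1-j)) \<le> real (hankel_w n1 (j+l+1))" using w_lower[OF assms] by simp
  have mpos: "real (min (j+1) (n1-j)) > 0" using assms by simp
  have "1 / real (hankel_w n1 (j+l+1)) \<le> 1 / real (min (j+1) (n1-j))"
    using m mpos by (simp add: frac_le)
  also have "\<dots> \<le> 1/real (j+1) + 1/real (n1-j)"
    by (cases "j+1 \<le> n1-j") (auto simp: min_def)
  finally show ?thesis .
qed

lemma inner_bound:
  fixes Z :: "nat \<Rightarrow> nat \<Rightarrow> complex"
  shows "(1 / real (hankel_w n1 a)) * (cmod (mat_inner n1 Z (hankel_G n1 a)))^2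
     \<le> (\<Sum>p\<in>{..<n1}\<times>{..<n1}. if fst p + snd p + 1 = a
            then (cmod (Z (fst p) (snd p)))^2 / real (hankel_w n1 a) else 0)"
proof -
  define A where "A = {..<n1}\<times>{..<n1}"
  define S where "S = {p\<in>A. fst p + snd p + 1 = a}"
  define w where "w = real (hankel_w n1 a)"
  have finA: "finite A" by (simp add: A_def)
  have finS: "finite S" using finA by (simp add: S_def)
  have wS: "w = real (card S)" unfolding w_def hankel_w_def S_def A_def
    by (rule arg_cong[where f="\<lambda>X. real (card X)"]) auto
  have rhs: "(\<Sum>p\<in>A. if fst p + snd p + 1 = a
            then (cmod (Z (fst p) (snd p)))^2 / w else 0) = (\<Sum>p\<in>S. (cmod (Z (fst p) (snd p)))^2) / w"
  proof -
    have "(\<Sum>p\<in>A. if fst p + snd p + 1 = a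
            then (cmod (Z (fst p) (snd p)))^2 / w else 0) = (\<Sum>p\<in>S. (cmod (Z (fst p) (snd p)))^2 / w)"
      unfolding S_def by (simp add: sum.inter_filter[OF finA])
    also have "\<dots> = (\<Sum>p\<in>S. (cmod (Z (fst p) (snd p)))^2) / w" by (simp add: sum_divide_distrib)
    finally show ?thesis .
  qed
  define c where "c = complex_of_real (1 / sqrt w)"
  have mi: "mat_inner n1 Z (hankel_G n1 a) = c * (\<Sum>p\<in>S. Z (fst p) (snd p))"
  proof -
    have "mat_inner n1 Z (hankel_G n1 a) = (\<Sum>p\<in>A. Z (fst p) (snd p) * cnj (hankel_G n1 a (fst p) (snd p)))"
      unfolding mat_inner_def A_def by (simp add: sum.cartesian_product case_prod_beta)
    also have "\<dots> = (\<Sum>p\<in>A. if fst p + snd p + 1 = a then c * Z (fst p) (snd p) else 0)"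
      by (rule sum.cong) (auto simp: hankel_G_def c_def w_def A_def)
    also have "\<dots> = c * (\<Sum>p\<in>S. Z (fst p) (snd p))"
      unfolding S_def by (simp add: sum.inter_filter[OF finA, symmetric] sum_distrib_left if_distrib)
    finally show ?thesis .
  qed
  show ?thesis
  proof (cases "w = 0")
    case True
    show ?thesis unfolding w_def[symmetric] A_def[symmetric] rhs using True by simp
  next
    case False
    hence wpos: "w > 0" by (simp add: w_def)
    have cm: "(cmod c)^2 = 1 / w" using wpos unfolding c_def norm_of_real by (simp add: power_divide)
    have "(cmod (\<Sum>p\<in>S. Z (fst p) (snd p)))^2 \<le> (\<Sum>p\<in>S. cmod (Z (fst p) (snd p)))^2"
      by (rule power_mono[OF norm_sum]) simp
    also have "\<dots> = (\<Sum>p\<in>S. 1 * cmod (Z (fst p) (snd p)))^2" by simp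
    also have "\<dots> \<le> (\<Sum>p\<in>S. 1^2) * (\<Sum>p\<in>S. (cmod (Z (fst p) (snd p)))^2)"
      by (rule Cauchy_Schwarz_ineq_sum)
    also have "\<dots> = w * (\<Sum>p\<in>S. (cmod (Z (fst p) (snd p)))^2)" using wS by simp
    finally have cs: "(cmod (\<Sum>p\<in>S. Z (fst p) (snd p)))^2 \<le> w * (\<Sum>p\<in>S. (cmod (Z (fst p) (snd p)))^2)" .
    have "(1/w) * (cmod (mat_inner n1 Z (hankel_G n1 a)))^2 = (1/w) * ((1/w) * (cmod (\<Sum>p\<in>S. Z (fst p) (snd p)))^2)"
      by (simp add: mi norm_mult power_mult_distrib cm)
    also have "\<dots> \<le> (1/w) * ((1/w) * (w * (\<Sum>p\<in>S. (cmod (Z (fst p) (snd p)))^2)))"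
      using cs wpos by (intro mult_left_mono) auto
    also have "\<dots> = (\<Sum>p\<in>S. (cmod (Z (fst p) (snd p)))^2) / w" using wpos by simp
    finally show ?thesis unfolding w_def[symmetric] A_def[symmetric] rhs .
  qed
qed

lemma per_matrix:
  fixes Z :: "nat \<Rightarrow> nat \<Rightarrow> complex"
  assumes n: "n = 2*n1 - 1" "n1 \<ge> 1"
  shows "(\<Sum>k=1..n. (1 / real (hankel_w n1 k)) * (cmod (mat_inner n1 Z (hankel_G n1 k)))^2)
     \<le> (\<Sum>j<n1. (1/real (j+1) + 1/real (n1-j)) * row_norm2 n1 Z j)"
proof -
  define A where "A = {..<n1}\<times>{..<n1}"
  define f where "f p = (cmod (Z (fst p) (snd p)))^2" for p
  have finA: "finite A" by (simp add: A_def)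
  have "(\<Sum>k=1..n. (1 / real (hankel_w n1 k)) * (cmod (mat_inner n1 Z (hankel_G n1 k)))^2)
      \<le> (\<Sum>k=1..n. \<Sum>p\<in>A. if fst p + snd p + 1 = k then f p / real (hankel_w n1 k) else 0)"
    unfolding A_def f_def by (rule sum_mono) (rule inner_bound)
  also have "\<dots> = (\<Sum>p\<in>A. \<Sum>k=1..n. if k = fst p + snd p + 1 then f p / real (hankel_w n1 k) else 0)"
    by (subst sum.swap) (auto intro!: sum.cong)
  also have "\<dots> = (\<Sum>p\<in>A. f p / real (hankel_w n1 (fst p + snd p + 1)))"
    using n by (intro sum.cong refl) (auto simp: A_def)
  also have "\<dots> \<le> (\<Sum>p\<in>A. (1/real (fst p+1) + 1/real (n1-fst p)) * f p)"
  proof (rule sum_mono)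
    fix p assume "p \<in> A"
    hence "1 / real (hankel_w n1 (fst p + snd p + 1)) \<le> 1/real (fst p+1) + 1/real (n1-fst p)"
      by (intro inv_w_le) (auto simp: A_def)
    moreover have "f p \<ge> 0" by (simp add: f_def)
    ultimately show "f p / real (hankel_w n1 (fst p + snd p + 1)) \<le> (1/real (fst p+1) + 1/real (n1-fst p)) * f p"
      by (metis divide_inverse inverse_eq_divide mult.commute mult_right_mono)
  qed
  also have "\<dots> = (\<Sum>j<n1. (1/real (j+1) + 1/real (n1-j)) * row_norm2 n1 Z j)"
  proof -
    have e: "(\<Sum>p\<in>A. g p) = (\<Sum>j<n1. \<Sum>l<n1. g (j,l))" for g :: "nat\<times>nat \<Rightarrow> real"
      by (simp add: A_def sum.cartesian_product)
    show ?thesis unfolding e unfolding row_norm2_def f_def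
      by (simp add: sum_distrib_left)
  qed
  finally show ?thesis .
qed

lemma harm_le_ln: "(m::nat) \<ge> 1 \<Longrightarrow> harm m \<le> 1 + ln (real m)"
proof -
  assume "m\<ge>1" then obtain k where "m = Suc k" by (cases m) auto
  have "harm (Suc k) - ln (Suc k) \<le> harm (Suc 0) - ln (Suc 0)"
    using decseq_harm_diff_ln unfolding decseq_def by blast
  thus ?thesis using \<open>m = Suc k\<close> by (simp add: harm_Suc harm_def)
qed

lemma hsum: "(\<Sum>j<n1. (1/real (j+1) + 1/real (n1-j))) = 2 * harm n1"
proof -
  have "(\<Sum>j<n1. 1/real (n1-j)) = (\<Sum>j<n1. 1/real (j+1))"
    by (subst sum.nat_diff_reindex[symmetric]) (auto intro!: sum.cong simp: Suc_diff_Suc)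
  thus ?thesis by (simp add: sum.distrib harm_altdef inverse_eq_divide)
qed

theorem lemmaC2:
  "\<exists>C>0. \<forall>(n::nat) (n1::nat) (d::nat) (Z::nat \<Rightarrow> nat \<Rightarrow> nat \<Rightarrow> complex) (B::real).
     n \<ge> 3 \<longrightarrow> odd n \<longrightarrow> n1 = (n + 1) div 2 \<longrightarrow> d \<ge> 1 \<longrightarrow>
     (\<forall>p<n1. (1 / real d) * (\<Sum>i<d. row_norm2 n1 (Z i) p) \<le> B) \<longrightarrow>
     (1 / real d) * (\<Sum>i<d. \<Sum>k=1..n.
         (1 / real (hankel_w n1 k)) * (cmod (mat_inner n1 (Z i) (hankel_G n1 k)))^2)
       \<le> C * B * ln (real n1)"
proof (intro exI[of _ 6] conjI allI impI)
  fix n n1 d :: nat and Z :: "nat \<Rightarrow> nat \<Rightarrow> nat \<Rightarrow> complex" and B :: real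
  assume h: "n \<ge> 3" "odd n" "n1 = (n + 1) div 2" "d \<ge> 1"
    and hB: "\<forall>p<n1. (1 / real d) * (\<Sum>i<d. row_norm2 n1 (Z i) p) \<le> B"
  have n1: "n1 \<ge> 2" "n = 2*n1 - 1" using h by (auto elim!: oddE)
  define h where "h j = 1/real (j+1) + 1/real (n1-j)" for j
  have hpos: "h j \<ge> 0" for j by (simp add: h_def)
  have B0: "B \<ge> 0"
  proof -
    have "0 \<le> (1 / real d) * (\<Sum>i<d. row_norm2 n1 (Z i) 0)"
      unfolding row_norm2_def by (intro mult_nonneg_nonneg sum_nonneg) auto
    thus ?thesis using hB n1 by force
  qed
  have "(1 / real d) * (\<Sum>i<d. \<Sum>k=1..n.
         (1 / real (hankel_w n1 k)) * (cmod (mat_inner n1 (Z i) (hankel_G n1 k)))^2)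
     \<le> (1 / real d) * (\<Sum>i<d. \<Sum>j<n1. h j * row_norm2 n1 (Z i) j)"
    using n1 unfolding h_def by (intro mult_left_mono sum_mono per_matrix) auto
  also have "\<dots> = (\<Sum>j<n1. h j * ((1 / real d) * (\<Sum>i<d. row_norm2 n1 (Z i) j)))"
    by (subst sum.swap) (simp add: sum_distrib_left sum_divide_distrib mult_ac)
  also have "\<dots> \<le> (\<Sum>j<n1. h j * B)"
    using hB hpos by (intro sum_mono mult_left_mono) auto
  also have "\<dots> = B * (2 * harm n1)" using hsum[of n1]
    by (simp add: h_def sum_distrib_left[symmetric] mult.commute)
  also have "\<dots> \<le> B * (2 * (1 + ln (real n1)))"
    using harm_le_ln[of n1] n1 B0 by (intro mult_left_mono) auto
  also have "\<dots> \<le> 6 * B * ln (real n1)"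
  proof -
    have "ln (real n1) \<ge> ln 2" using n1 by (intro ln_mono) auto
    hence "ln (real n1) \<ge> 2/3" using ln2_ge_two_thirds by linarith
    hence "2 * (1 + ln (real n1)) \<le> 6 * ln (real n1)" by (simp add: algebra_simps)
    thus ?thesis using B0 by (metis mult.assoc mult.commute mult_left_mono)
  qed
  finally show "(1 / real d) * (\<Sum>i<d. \<Sum>k=1..n.
         (1 / real (hankel_w n1 k)) * (cmod (mat_inner n1 (Z i) (hankel_G n1 k)))^2)
       \<le> 6 * B * ln (real n1)" .
qed simp

end
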